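(* Let $C$ be a nonzero $A$-code of length $l$, let $G$ be a matrix whose rows form a basis of divisors of $C$, and let $H$ be the output of the algorithm gen-mat-dual on input $G$. Let $\tilde H$ be the matrix obtained from $H$ by deleting its zero rows, say with $r$ rows, and let $H^R$ be the $r\times l$ matrix with entries $h^R_{ij}=\tilde h_{r-i+1,\,l-j+1}$. Then $H^R$ is the canonical generator matrix of the reciprocal dual $C^{\perp R}=\{(c_l,\ldots,c_1):(c_1,\ldots,c_l)\in C^\perp\}$.
   Context: Let $\mathbb{F}$ be a finite field, $f(x)\in\mathbb{F}[x]$ monic of degree $m$, $A=\mathbb{F}[x]/\langle f(x)\rangle$, elements identified with polynomials of degree $<m$. An $A$-code of length $l$ is an $A$-submodule of $A^l$; $C^\perp=\{a\in A^l:\sum_ia_ic_i=0\ \forall c\in C\}$. For $u\in A^l$, $L_{\mathrm{ind}}(u)$ is the smallest index of a nonzero entry and $L_{\mathrm{coef}}(u)$ that entry. For nonzero $C$, $L_{\mathrm{ind}}(C)=\min_{u\in C}L_{\mathrm{ind}}(u)$; $L_{\mathrm{coef}}(C)$ is the monic polynomial $g$ of minimal degree such that some $c\in C$ has $L_{\mathrm{ind}}(c)=L_{\mathrm{ind}}(C)$ and $L_{\mathrm{coef}}(c)=g$; such $c$ is a leading element. $C^{(1)}=C$, $C^{(n+1)}=\{c\in C^{(n)}:L_{\mathrm{ind}}(c)>L_{\mathrm{ind}}(C^{(n)})\}$ while $C^{(n)}\neq0$; with $k$ largest such that $C^{(k)}\ne0$, a tuple $(g^{(1)},\dots,g^{(k)})$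 with $g^{(j)}$ a leading element of $C^{(j)}$ is a basis of divisors (leading coefficients are then monic divisors of $f$). The canonical generator matrix (CGM) of a nonzero $A$-code is the unique matrix whose rows $g^{(1)},\dots,g^{(k)}$ form a basis of divisors and satisfy $\deg g_{t,j_i}<\deg g_{i,j_i}$ for all $t<i$, where $g_{i,j_i}$ is the leading coefficient of row $i$. Algorithm gen-mat-dual, on input a $k\times l$ matrix $G=(g_{ij})$ whose rows form a basis of divisors of an $A$-code, returns $H$ defined recursively: (1) If the first column of $G$ is zero: if $l=1$, $H=(1)$; otherwise $H=\begin{pmatrix}1&0\\0&H'\end{pmatrix}$, where $H'$ is the output on $G$ with its first column deleted. (2) Otherwise: if $l=1$, $H=(h_{1,1})$ where $h_{1,1}$ is the image in $A$ of $f/g_{1,1}$. If $l>1$: let $H'=I_{l-1}$ if $k=1$, and otherwise let $H'$ be the output on $G$ with its first row and first column deleted; index the entries of $H'$ as $h'_{ij}$, $2\le i\le s$, $2\le j\le l$. Then $H$ has first row $(h_{1,1},0,\ldots,0)$ with $h_{1,1}$ the image of $f/g_{1,1}$, and for $2\le i\le s$ its $i$-th row is $(\alpha_i,h'_{i2},\ldots,h'_{il})$, where $\alpha_i$ is the remainder modulo the polynomial $f/g_{1,1}$ of the polynomial $-\bigl(\sum_{j=2}^l h'_{ij}g_{1j}\bigr)/g_{1,1}$ (entries regarded as polynomials of degree $<m$; this quotient is a polynomial). *)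

theory Defs
  imports "HOL-Computational_Algebra.Polynomial"
begin

text \<open>A = F[x]/(f) with elements represented by polynomials p with
 p mod f = p (i.e. degree < m). Vectors of A^l are lists of length l, indices are
 0-based (index i here = index i+1 in the paper). Matrices are lists of rows.\<close>

definition inA :: "'a::field poly \<Rightarrow> 'a poly \<Rightarrow> bool" where
  "inA f p \<longleftrightarrow> p mod f = p"

definition vecA :: "'a::field poly \<Rightarrow> nat \<Rightarrow> 'a poly list set" where
  "vecA f l = {u. length u = l \<and> (\<forall>x\<in>set u. inA f x)}"

definition A_code :: "'a::field poly \<Rightarrow> nat \<Rightarrow> 'a poly list set \<Rightarrow> bool" where
  "A_code f l C \<longleftrightarrow> C \<subseteq> vecA f l \<and> replicate l 0 \<in> C
     \<and> (\<forall>u\<in>C. \<forall>v\<in>C. map2 (+) u v \<in> C)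
     \<and> (\<forall>a. inA f a \<longrightarrow> (\<forall>u\<in>C. map (\<lambda>x. (a * x) mod f) u \<in> C))"

definition dualA :: "'a::field poly \<Rightarrow> nat \<Rightarrow> 'a poly list set \<Rightarrow> 'a poly list set" where
  "dualA f l C = {a \<in> vecA f l. \<forall>c\<in>C. (\<Sum>i<l. a ! i * c ! i) mod f = 0}"

definition recip_dual :: "'a::field poly \<Rightarrow> nat \<Rightarrow> 'a poly list set \<Rightarrow> 'a poly list set" where
  "recip_dual f l C = rev ` dualA f l C"

definition nzv :: "'a::zero list \<Rightarrow> bool" where
  "nzv u \<longleftrightarrow> (\<exists>x\<in>set u. x \<noteq> 0)"

text \<open>L_ind of a vector; the zero vector gets index length u (playing the role of infinity).\<close>
definition lind :: "'a::zero list \<Rightarrow> nat" where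
  "lind u = (if nzv u then (LEAST i. i < length u \<and> u ! i \<noteq> 0) else length u)"

definition lcoef :: "'a::zero list \<Rightarrow> 'a" where
  "lcoef u = u ! lind u"

definition lindC :: "'a::zero list set \<Rightarrow> nat" where
  "lindC C = (LEAST i. \<exists>u\<in>C. nzv u \<and> lind u = i)"

definition leading_elem :: "'a::field poly list set \<Rightarrow> 'a poly list \<Rightarrow> bool" where
  "leading_elem C c \<longleftrightarrow> c \<in> C \<and> nzv c \<and> lind c = lindC C \<and> lead_coeff (lcoef c) = 1
     \<and> (\<forall>d\<in>C. nzv d \<and> lind d = lindC C \<and> lead_coeff (lcoef d) = 1
            \<longrightarrow> degree (lcoef c) \<le> degree (lcoef d))"

text \<open>filt C n is C^{(n+1)} of the paper.\<close>
primrec filt :: "'a::zero list set \<Rightarrow> nat \<Rightarrow> 'a list set" where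
  "filt C 0 = C"
| "filt C (Suc n) = {c \<in> filt C n. lind c > lindC (filt C n)}"

definition basis_div :: "'a::field poly list set \<Rightarrow> 'a poly list list \<Rightarrow> bool" where
  "basis_div C G \<longleftrightarrow> (\<forall>j<length G. leading_elem (filt C j) (G ! j))
     \<and> (\<forall>u\<in>filt C (length G). \<not> nzv u)"

text \<open>Canonical generator matrix (a zero polynomial counts as degree -infinity).\<close>
definition is_CGM :: "'a::field poly list set \<Rightarrow> 'a poly list list \<Rightarrow> bool" where
  "is_CGM C G \<longleftrightarrow> basis_div C G \<and>
     (\<forall>i<length G. \<forall>t<i. G ! t ! lind (G ! i) = 0 \<or>
         degree (G ! t ! lind (G ! i)) < degree (G ! i ! lind (G ! i)))"

definition idmat :: "nat \<Rightarrow> 'a::{zero,one} list list" where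
  "idmat n = map (\<lambda>i. map (\<lambda>j. if i = j then 1 else 0) [0..<n]) [0..<n]"

text \<open>Algorithm gen-mat-dual; second argument is the length l (number of columns).\<close>
fun gen_mat_dual :: "'a::field poly \<Rightarrow> nat \<Rightarrow> 'a poly list list \<Rightarrow> 'a poly list list" where
  "gen_mat_dual f 0 G = []"
| "gen_mat_dual f (Suc l') G =
    (if (\<forall>r\<in>set G. hd r = 0) then
       (if l' = 0 then [[1]]
        else (1 # replicate l' 0) # map (\<lambda>r. 0 # r) (gen_mat_dual f l' (map tl G)))
     else
       (let g11 = hd (hd G); h11 = (f div g11) mod f in
        if l' = 0 then [[h11]]
        else
          (let H' = (if length G = 1 then idmat l' else gen_mat_dual f l' (map tl (tl G)))
           in (h11 # replicate l' 0) #
              map (\<lambda>hr. ((- (\<Sum>j<l'. hr ! j * tl (hd G) ! j)) div g11) mod (f div g11) # hr) H')))"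

end

theory Submission
  imports Defs
begin


lemma inA_iff: assumes f: "(f::'a::field poly) \<noteq> 0" shows "inA f p \<longleftrightarrow> (p = 0 \<or> degree p < degree f)"
proof -
  { assume "inA f p" "p \<noteq> 0"
    hence "degree p < degree f" using degree_mod_less[OF f, of p] unfolding inA_def by simp }
  moreover
  { assume "p = 0 \<or> degree p < degree f"
    hence "inA f p" unfolding inA_def using mod_poly_less[of p f] by auto }
  ultimately show ?thesis by blast
qed

lemma nzv_iff: "nzv u \<longleftrightarrow> (\<exists>i<length u. u!i \<noteq> 0)"
  unfolding nzv_def by (metis in_set_conv_nth)

lemma lind_nz:
  assumes "nzv u"
  shows "lind u < length u \<and> u!(lind u) \<noteq> 0 \<and> (\<forall>j<lind u. u!j = 0)"
proof -
  obtain i where i: "i < length u" "u!i \<noteq> 0" using assms nzv_iff by blast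
  have e: "lind u = (LEAST i. i < length u \<and> u ! i \<noteq> 0)" unfolding lind_def using assms by simp
  have "lind u < length u \<and> u!(lind u) \<noteq> 0" unfolding e by (rule LeastI[of _ i]) (use i in auto)
  moreover have "\<forall>j<lind u. u!j = 0"
  proof (intro allI impI)
    fix j assume j: "j < lind u"
    show "u!j = 0"
    proof (rule ccontr)
      assume "u!j \<noteq> 0"
      hence "lind u \<le> j" unfolding e by (intro Least_le) (use j calculation in auto)
      thus False using j by simp
    qed
  qed
  ultimately show ?thesis by blast
qed

lemma lind_eqI: "i < length u \<Longrightarrow> u!i \<noteq> 0 \<Longrightarrow> (\<forall>j<i. u!j = 0) \<Longrightarrow> lind u = i"
proof -
  assume a: "i < length u" "u!i \<noteq> 0" "\<forall>j<i. u!j = 0"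
  hence nz: "nzv u" using nzv_iff by blast
  from lind_nz[OF nz] a show ?thesis by (meson linorder_neqE_nat)
qed

lemma lind_notnz: "\<not> nzv u \<Longrightarrow> lind u = length u"
  unfolding lind_def by simp

lemma nzv_Cons0[simp]: "nzv (0 # u) = nzv u" by (simp add: nzv_def)

lemma lind_Cons0: "lind (0 # u) = Suc (lind u)"
proof (cases "nzv u")
  case True
  note L = lind_nz[OF True]
  show ?thesis
  proof (rule lind_eqI)
    show "Suc (lind u) < length (0 # u)" using L by simp
    show "(0 # u) ! Suc (lind u) \<noteq> 0" using L by simp
    show "\<forall>j<Suc (lind u). (0 # u) ! j = 0"
    proof (intro allI impI)
      fix j assume "j < Suc (lind u)"
      thus "(0 # u) ! j = 0" using L by (cases j) auto
    qed
  qed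
next
  case False
  hence "\<not> nzv (0#u)" by simp
  thus ?thesis using lind_notnz[OF False] lind_notnz[of "0#u"] by simp
qed

lemma lcoef_Cons0[simp]: "lcoef (0 # u) = lcoef u" unfolding lcoef_def lind_Cons0 by simp

lemma lind_zero_iff: assumes ne: "u \<noteq> []" shows "lind u = 0 \<longleftrightarrow> u!0 \<noteq> 0"
proof
  assume z: "lind u = 0"
  show "u!0 \<noteq> 0"
  proof (cases "nzv u")
    case True thus ?thesis using lind_nz[OF True] z by simp
  next
    case False thus ?thesis using lind_notnz[OF False] z ne by simp
  qed
next
  assume "u!0 \<noteq> 0" thus "lind u = 0" using ne by (intro lind_eqI) auto
qed

lemma lindC_eq:
  assumes "u \<in> X" "nzv u" "\<forall>v\<in>X. nzv v \<longrightarrow> lind u \<le> lind v"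
  shows "lindC X = lind u"
  unfolding lindC_def by (rule Least_equality) (use assms in auto)

lemma filt_subset: "filt C j \<subseteq> C"
  by (induction j) auto

definition bd :: "'a::field poly list set \<Rightarrow> 'a poly list list \<Rightarrow> bool" where
  "bd C G \<longleftrightarrow> sorted_wrt (<) (map lind G) \<and>
     (\<forall>g\<in>set G. g \<in> C \<and> nzv g \<and> lead_coeff (lcoef g) = 1 \<and>
        (\<forall>d\<in>C. nzv d \<and> lind d = lind g \<and> lead_coeff (lcoef d) = 1 \<longrightarrow> degree (lcoef g) \<le> degree (lcoef d)))
     \<and> (\<forall>c\<in>C. nzv c \<longrightarrow> (\<exists>g\<in>set G. lind c = lind g))"

lemma basis_div_bd:
  assumes B: "basis_div C G"
  shows "bd C G"
proof -
  define N where "N j = {c\<in>C. nzv c \<and> (\<forall>i<j. lind (G!i) < lind c)}" for j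
  have LE: "\<And>j. j < length G \<Longrightarrow> leading_elem (filt C j) (G!j)" using B basis_div_def by blast
  have fN: "j \<le> length G \<Longrightarrow> {c \<in> filt C j. nzv c} = N j" for j
  proof (induction j)
    case 0 thus ?case by (auto simp: N_def)
  next
    case (Suc j)
    have lc: "lindC (filt C j) = lind (G!j)" using LE[of j] Suc.prems by (simp add: leading_elem_def)
    have "{c \<in> filt C (Suc j). nzv c} = {c \<in> N j. lind (G!j) < lind c}"
      using Suc by (auto simp: lc)
    also have "\<dots> = N (Suc j)" by (auto simp: N_def less_Suc_eq)
    finally show ?case .
  qed
  have GN: "j < length G \<Longrightarrow> G!j \<in> N j" for j
    using fN[of j] LE[of j] by (auto simp: leading_elem_def)
  have sorted: "sorted_wrt (<) (map lind G)"
    unfolding sorted_wrt_iff_nth_less using GN by (auto simp: N_def)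
  have rows: "\<forall>g\<in>set G. g \<in> C \<and> nzv g \<and> lead_coeff (lcoef g) = 1 \<and>
        (\<forall>d\<in>C. nzv d \<and> lind d = lind g \<and> lead_coeff (lcoef d) = 1 \<longrightarrow> degree (lcoef g) \<le> degree (lcoef d))"
  proof
    fix g assume "g \<in> set G"
    then obtain j where j: "j < length G" "g = G!j" by (auto simp: in_set_conv_nth)
    have le: "leading_elem (filt C j) g" using LE j by simp
    have gN: "g \<in> N j" using GN j by simp
    show "g \<in> C \<and> nzv g \<and> lead_coeff (lcoef g) = 1 \<and>
        (\<forall>d\<in>C. nzv d \<and> lind d = lind g \<and> lead_coeff (lcoef d) = 1 \<longrightarrow> degree (lcoef g) \<le> degree (lcoef d))"
    proof (intro conjI ballI impI)
      show "g \<in> C" using gN by (simp add: N_def)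
      show "nzv g" using le by (simp add: leading_elem_def)
      show "lead_coeff (lcoef g) = 1" using le by (simp add: leading_elem_def)
      fix d assume d: "d \<in> C" "nzv d \<and> lind d = lind g \<and> lead_coeff (lcoef d) = 1"
      have "d \<in> N j" using d gN by (auto simp: N_def)
      hence "d \<in> filt C j" using fN[of j] j by auto
      thus "degree (lcoef g) \<le> degree (lcoef d)" using le d by (auto simp: leading_elem_def)
    qed
  qed
  have cover: "\<forall>c\<in>C. nzv c \<longrightarrow> (\<exists>g\<in>set G. lind c = lind g)"
  proof (intro ballI impI, rule ccontr)
    fix c assume c: "c \<in> C" "nzv c" and no: "\<not> (\<exists>g\<in>set G. lind c = lind g)"
    have "j \<le> length G \<Longrightarrow> c \<in> N j" for j
    proof (induction j)
      case 0 thus ?case using c by (simp add: N_def)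
    next
      case (Suc j)
      hence cj: "c \<in> N j" by simp
      hence "c \<in> filt C j" using fN[of j] Suc.prems by auto
      hence "lindC (filt C j) \<le> lind c" unfolding lindC_def by (intro Least_le) (use c in auto)
      moreover have "lindC (filt C j) = lind (G!j)" using LE[of j] Suc.prems by (simp add: leading_elem_def)
      moreover have "lind c \<noteq> lind (G!j)" using no Suc.prems by auto
      ultimately show ?case using cj by (auto simp: N_def less_Suc_eq)
    qed
    hence "c \<in> {c \<in> filt C (length G). nzv c}" using fN by auto
    thus False using B by (auto simp: basis_div_def)
  qed
  show ?thesis using sorted rows cover by (simp add: bd_def)
qed

lemma bd_basis_div:
  assumes B: "bd C G"
  shows "basis_div C G"
proof -
  define N where "N j = {c\<in>C. nzv c \<and> (\<forall>i<j. lind (G!i) < lind c)}" for j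
  have srt: "i < j \<Longrightarrow> j < length G \<Longrightarrow> lind (G!i) < lind (G!j)" for i j
    using B by (auto simp: bd_def sorted_wrt_iff_nth_less)
  have rowC: "j < length G \<Longrightarrow> G!j \<in> C \<and> nzv (G!j)" for j using B by (auto simp: bd_def)
  have cov: "\<And>c. c \<in> C \<Longrightarrow> nzv c \<Longrightarrow> \<exists>g\<in>set G. lind c = lind g" using B unfolding bd_def by blast
  have GN: "j < length G \<Longrightarrow> G!j \<in> N j" for j using srt rowC by (auto simp: N_def)
  have minN: "j < length G \<Longrightarrow> v \<in> N j \<Longrightarrow> lind (G!j) \<le> lind v" for j v
  proof -
    assume j: "j < length G" and v: "v \<in> N j"
    then obtain g where g: "g \<in> set G" "lind v = lind g" using cov unfolding N_def by blast
    then obtain k where k: "k < length G" "g = G!k" by (auto simp: in_set_conv_nth)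
    show ?thesis
    proof (cases "k < j")
      case True thus ?thesis using v g k by (auto simp: N_def)
    next
      case False thus ?thesis using srt[of j k] k g by (cases "j = k") auto
    qed
  qed
  have fN: "j \<le> length G \<Longrightarrow> {c \<in> filt C j. nzv c} = N j" for j
  proof (induction j)
    case 0 thus ?case by (auto simp: N_def)
  next
    case (Suc j)
    have jl: "j < length G" using Suc by simp
    have IH: "{c \<in> filt C j. nzv c} = N j" using Suc by simp
    have lc: "lindC (filt C j) = lind (G!j)"
      by (rule lindC_eq) (use GN[OF jl] IH minN[OF jl] in auto)
    have "{c \<in> filt C (Suc j). nzv c} = {c \<in> N j. lind (G!j) < lind c}"
      using IH by (auto simp: lc)
    also have "\<dots> = N (Suc j)" by (auto simp: N_def less_Suc_eq)
    finally show ?case .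
  qed
  have "leading_elem (filt C j) (G!j)" if jl: "j < length G" for j
  proof -
    have IH: "{c \<in> filt C j. nzv c} = N j" using fN jl by simp
    have lc: "lindC (filt C j) = lind (G!j)"
      by (rule lindC_eq) (use GN[OF jl] IH minN[OF jl] in auto)
    have gs: "G!j \<in> set G" using jl by simp
    have gf: "G!j \<in> filt C j" using GN[OF jl] IH by blast
    have rj: "G!j \<in> C \<and> nzv (G!j) \<and> lead_coeff (lcoef (G!j)) = 1 \<and>
        (\<forall>d\<in>C. nzv d \<and> lind d = lind (G!j) \<and> lead_coeff (lcoef d) = 1 \<longrightarrow> degree (lcoef (G!j)) \<le> degree (lcoef d))"
      using B gs unfolding bd_def by blast
    show ?thesis unfolding leading_elem_def lc
      using gf rj filt_subset[of C j] by blast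
  qed
  moreover have "\<forall>u\<in>filt C (length G). \<not> nzv u"
  proof (intro ballI notI)
    fix u assume u: "u \<in> filt C (length G)" "nzv u"
    hence "u \<in> N (length G)" using fN by auto
    then obtain g where g: "g \<in> set G" "lind u = lind g" using cov unfolding N_def by blast
    then obtain k where k: "k < length G" "g = G!k" by (auto simp: in_set_conv_nth)
    thus False using \<open>u \<in> N (length G)\<close> g by (auto simp: N_def)
  qed
  ultimately show ?thesis by (simp add: basis_div_def)
qed



lemma code_smul:
  assumes AC: "A_code f l C" and v: "v \<in> C"
  shows "map (\<lambda>x. (a * x) mod f) v \<in> C"
proof -
  have "inA f (a mod f)" by (simp add: inA_def)
  hence "map (\<lambda>x. ((a mod f) * x) mod f) v \<in> C" using AC v by (simp add: A_code_def)
  thus ?thesis by (simp add: mod_mult_left_eq)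
qed

lemma code_comb:
  assumes AC: "A_code f l C" and u: "u \<in> C" and v: "v \<in> C"
  shows "map2 (+) u (map (\<lambda>x. (a * x) mod f) v) \<in> C"
  using code_smul[OF AC v, of a] AC u by (simp add: A_code_def)

lemma code_len: "A_code f l C \<Longrightarrow> c \<in> C \<Longrightarrow> length c = l"
  by (auto simp: A_code_def vecA_def)

lemma code_inA: "A_code f l C \<Longrightarrow> c \<in> C \<Longrightarrow> i < l \<Longrightarrow> inA f (c!i)"
  by (auto simp: A_code_def vecA_def)

lemma sum_Cons: "(\<Sum>i<Suc n. (x#a)!i * (y#c)!i) = x*y + (\<Sum>i<n. a!i * c!i)"
  by (subst sum.lessThan_Suc_shift) simp

lemma mod_sub_dvd: "(f::'a::field poly) dvd (z mod f - z)"
  using mod_eq_dvd_iff[of "z mod f" f z] by simp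

lemma sum_mod_dvd:
  "(f::'a::field poly) dvd ((\<Sum>i<n. a!i * ((b * y!i) mod f)) - b * (\<Sum>i<n. a!i * y!i))"
proof -
  have "(\<Sum>i<n. a!i * ((b * y!i) mod f)) - b * (\<Sum>i<n. a!i * y!i)
      = (\<Sum>i<n. a!i * ((b * y!i) mod f - b * y!i))"
    by (simp add: sum_distrib_left sum_subtractf algebra_simps)
  also have "f dvd \<dots>" by (intro dvd_sum dvd_mult mod_sub_dvd)
  finally show ?thesis .
qed

lemma A_code_sub:
  assumes AC: "A_code f (Suc l') C"
  shows "A_code f l' {c'. 0 # c' \<in> C}"
proof -
  have sub: "C \<subseteq> vecA f (Suc l')" and z: "replicate (Suc l') 0 \<in> C"
    and add: "\<forall>u\<in>C. \<forall>v\<in>C. map2 (+) u v \<in> C"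
    and sm: "\<forall>a. inA f a \<longrightarrow> (\<forall>u\<in>C. map (\<lambda>x. (a * x) mod f) u \<in> C)"
    using AC unfolding A_code_def by blast+
  have "{c'. 0 # c' \<in> C} \<subseteq> vecA f l'" using sub by (auto simp: vecA_def)
  moreover have "replicate l' 0 \<in> {c'. 0 # c' \<in> C}" using z by simp
  moreover have "\<forall>u\<in>{c'. 0 # c' \<in> C}. \<forall>v\<in>{c'. 0 # c' \<in> C}. map2 (+) u v \<in> {c'. 0 # c' \<in> C}"
  proof (intro ballI)
    fix u v assume "u \<in> {c'. 0 # c' \<in> C}" "v \<in> {c'. 0 # c' \<in> C}"
    hence "map2 (+) (0#u) (0#v) \<in> C" using add by blast
    thus "map2 (+) u v \<in> {c'. 0 # c' \<in> C}" by simp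
  qed
  moreover have "\<forall>a. inA f a \<longrightarrow> (\<forall>u\<in>{c'. 0 # c' \<in> C}. map (\<lambda>x. (a * x) mod f) u \<in> {c'. 0 # c' \<in> C})"
  proof (intro allI impI ballI)
    fix a u assume "inA f a" "u \<in> {c'. 0 # c' \<in> C}"
    hence "map (\<lambda>x. (a * x) mod f) (0#u) \<in> C" using sm by blast
    thus "map (\<lambda>x. (a * x) mod f) u \<in> {c'. 0 # c' \<in> C}" by simp
  qed
  ultimately show ?thesis unfolding A_code_def by blast
qed

lemma dual_mod_dvd: "a \<in> dualA f l C \<Longrightarrow> c \<in> C \<Longrightarrow> f dvd (\<Sum>i<l. a ! i * c ! i)"
  by (auto simp: dualA_def dvd_eq_mod_eq_0)

lemma bd_transfer:
  assumes B: "bd C G" and len: "\<forall>c\<in>C. length c = Suc l'"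
  shows "bd {c'. 0 # c' \<in> C} (map tl (filter (\<lambda>r. hd r = 0) G))"
proof -
  have GC: "\<And>r. r \<in> set G \<Longrightarrow> r \<in> C" using B by (auto simp: bd_def)
  have collapse: "\<And>r. r \<in> set G \<Longrightarrow> hd r = 0 \<Longrightarrow> r = 0 # tl r"
  proof -
    fix r assume r: "r \<in> set G" "hd r = 0"
    hence "r \<noteq> []" using len GC by fastforce
    thus "r = 0 # tl r" using r by (metis list.collapse)
  qed
  have s1: "sorted_wrt (\<lambda>x y. lind x < lind y) (filter (\<lambda>r. hd r = 0) G)"
    using B by (intro sorted_wrt_filter) (simp add: bd_def sorted_wrt_map)
  have sorted: "sorted_wrt (<) (map lind (map tl (filter (\<lambda>r. hd r = 0) G)))"
    unfolding sorted_wrt_map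
  proof (rule sorted_wrt_mono_rel[OF _ s1])
    fix x y assume x: "x \<in> set (filter (\<lambda>r. hd r = 0) G)" and y: "y \<in> set (filter (\<lambda>r. hd r = 0) G)"
      and xy: "lind x < lind y"
    have "x = 0 # tl x" "y = 0 # tl y" using x y collapse by auto
    hence "lind x = Suc (lind (tl x))" "lind y = Suc (lind (tl y))" by (metis lind_Cons0)+
    thus "lind (tl x) < lind (tl y)" using xy by simp
  qed
  have rows: "\<forall>g\<in>set (map tl (filter (\<lambda>r. hd r = 0) G)). g \<in> {c'. 0 # c' \<in> C} \<and> nzv g \<and> lead_coeff (lcoef g) = 1 \<and>
        (\<forall>d\<in>{c'. 0 # c' \<in> C}. nzv d \<and> lind d = lind g \<and> lead_coeff (lcoef d) = 1 \<longrightarrow> degree (lcoef g) \<le> degree (lcoef d))"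
  proof
    fix g assume "g \<in> set (map tl (filter (\<lambda>r. hd r = 0) G))"
    then obtain r where r: "r \<in> set G" "hd r = 0" "g = tl r" by auto
    have rg: "r = 0 # g" using collapse r by auto
    have R: "r \<in> C \<and> nzv r \<and> lead_coeff (lcoef r) = 1 \<and>
        (\<forall>d\<in>C. nzv d \<and> lind d = lind r \<and> lead_coeff (lcoef d) = 1 \<longrightarrow> degree (lcoef r) \<le> degree (lcoef d))"
      using B r(1) by (simp add: bd_def)
    show "g \<in> {c'. 0 # c' \<in> C} \<and> nzv g \<and> lead_coeff (lcoef g) = 1 \<and>
        (\<forall>d\<in>{c'. 0 # c' \<in> C}. nzv d \<and> lind d = lind g \<and> lead_coeff (lcoef d) = 1 \<longrightarrow> degree (lcoef g) \<le> degree (lcoef d))"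
    proof (intro conjI ballI impI)
      show "g \<in> {c'. 0 # c' \<in> C}" using R rg by simp
      show "nzv g" using R rg by simp
      show "lead_coeff (lcoef g) = 1" using R rg by simp
      fix d assume d: "d \<in> {c'. 0 # c' \<in> C}" "nzv d \<and> lind d = lind g \<and> lead_coeff (lcoef d) = 1"
      have "0 # d \<in> C" "nzv (0 # d)" "lind (0 # d) = lind r" "lead_coeff (lcoef (0 # d)) = 1"
        using d by (auto simp: rg lind_Cons0)
      hence "degree (lcoef r) \<le> degree (lcoef (0 # d))" using R by blast
      thus "degree (lcoef g) \<le> degree (lcoef d)" using rg by simp
    qed
  qed
  have cover: "\<forall>c\<in>{c'. 0 # c' \<in> C}. nzv c \<longrightarrow> (\<exists>g\<in>set (map tl (filter (\<lambda>r. hd r = 0) G)). lind c = lind g)"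
  proof (intro ballI impI)
    fix c assume c: "c \<in> {c'. 0 # c' \<in> C}" "nzv c"
    then obtain g where g: "g \<in> set G" "lind (0 # c) = lind g" using B by (auto simp: bd_def)
    have gne: "g \<noteq> []" using len GC g by fastforce
    have "lind g \<noteq> 0" using g by (simp add: lind_Cons0)
    hence "g!0 = 0" using lind_zero_iff[OF gne] by simp
    hence hg: "hd g = 0" using gne by (simp add: hd_conv_nth)
    hence "g = 0 # tl g" using collapse g by auto
    hence "lind c = lind (tl g)" using g by (metis lind_Cons0 nat.inject)
    moreover have "tl g \<in> set (map tl (filter (\<lambda>r. hd r = 0) G))" using g hg by auto
    ultimately show "\<exists>g\<in>set (map tl (filter (\<lambda>r. hd r = 0) G)). lind c = lind g" by blast
  qed
  show ?thesis using sorted rows cover unfolding bd_def by blast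
qed

definition goodH :: "'a::field poly \<Rightarrow> nat \<Rightarrow> 'a poly list set \<Rightarrow> 'a poly list list \<Rightarrow> bool" where
 "goodH f l C H \<longleftrightarrow> length H = l \<and>
   (\<forall>i<l. H!i \<in> dualA f l C) \<and>
   (\<forall>i<l. \<forall>j<l. i < j \<longrightarrow> H!i!j = 0) \<and>
   (\<forall>i<l. \<forall>d\<in>dualA f l C. (\<forall>j<l. i < j \<longrightarrow> d!j = 0) \<longrightarrow> H!i!i dvd d!i) \<and>
   (\<forall>i<l. H!i!i = 0 \<or> lead_coeff (H!i!i) = 1) \<and>
   (\<forall>i<l. H!i!i = 0 \<longrightarrow> (\<forall>j<l. H!i!j = 0)) \<and>
   (\<forall>p<l. \<forall>q<p. H!q!q \<noteq> 0 \<longrightarrow> H!p!q = 0 \<or> degree (H!p!q) < degree (H!q!q))"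

lemma zero_in_dual: "replicate n 0 \<in> dualA f n C"
  by (simp add: dualA_def vecA_def inA_def)

lemma dual_len: "d \<in> dualA f n C \<Longrightarrow> length d = n"
  by (simp add: dualA_def vecA_def)

lemma dual_inA: "d \<in> dualA f n C \<Longrightarrow> i < n \<Longrightarrow> inA f (d!i)"
  by (simp add: dualA_def vecA_def)



lemma goodH_D:
  assumes "goodH f l C H"
  shows "length H = l" "\<forall>i<l. H!i \<in> dualA f l C"
    "\<forall>i<l. \<forall>j<l. i < j \<longrightarrow> H!i!j = 0"
    "\<forall>i<l. \<forall>d\<in>dualA f l C. (\<forall>j<l. i < j \<longrightarrow> d!j = 0) \<longrightarrow> H!i!i dvd d!i"
    "\<forall>i<l. H!i!i = 0 \<or> lead_coeff (H!i!i) = 1"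
    "\<forall>i<l. H!i!i = 0 \<longrightarrow> (\<forall>j<l. H!i!j = 0)"
    "\<forall>p<l. \<forall>q<p. H!q!q \<noteq> 0 \<longrightarrow> H!p!q = 0 \<or> degree (H!p!q) < degree (H!q!q)"
  using assms unfolding goodH_def
  apply -
  apply (elim conjE, assumption)+
  done

lemma caseA:
  fixes f :: "'a::field poly"
  assumes f: "f \<noteq> 0" "degree f \<ge> 1"
  and AC: "A_code f (Suc l') C"
  and hd0: "\<forall>c\<in>C. hd c = 0"
  and IH: "goodH f l' {c'. 0#c' \<in> C} H'"
  shows "goodH f (Suc l') C ((1 # replicate l' 0) # map ((#) 0) H')"
proof -
  define C' where "C' = {c'. 0#c' \<in> C}"
  define H where "H = (1 # replicate l' 0) # map ((#) 0) H'"
  have cC: "\<And>c. c \<in> C \<Longrightarrow> c = 0 # tl c \<and> tl c \<in> C'"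
  proof -
    fix c assume c: "c \<in> C"
    have "length c = Suc l'" using code_len[OF AC c] .
    hence "c \<noteq> []" by auto
    hence "c = 0 # tl c" using hd0 c by (metis list.collapse)
    thus "c = 0 # tl c \<and> tl c \<in> C'" using c unfolding C'_def by simp
  qed
  have memD: "\<And>x a'. x # a' \<in> dualA f (Suc l') C \<longleftrightarrow> inA f x \<and> a' \<in> dualA f l' C'"
  proof -
    fix x a'
    show "x # a' \<in> dualA f (Suc l') C \<longleftrightarrow> inA f x \<and> a' \<in> dualA f l' C'"
    proof
      assume a: "x # a' \<in> dualA f (Suc l') C"
      have "inA f x \<and> a' \<in> vecA f l'" using a by (auto simp: dualA_def vecA_def)
      moreover have "\<forall>c\<in>C'. (\<Sum>i<l'. a' ! i * c ! i) mod f = 0"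
      proof
        fix c assume "c \<in> C'"
        hence "0 # c \<in> C" by (simp add: C'_def)
        hence "(\<Sum>i<Suc l'. (x#a') ! i * (0#c) ! i) mod f = 0" using a by (simp add: dualA_def)
        thus "(\<Sum>i<l'. a' ! i * c ! i) mod f = 0" by (simp only: sum_Cons) simp
      qed
      ultimately show "inA f x \<and> a' \<in> dualA f l' C'" by (simp add: dualA_def)
    next
      assume a: "inA f x \<and> a' \<in> dualA f l' C'"
      have "x # a' \<in> vecA f (Suc l')" using a by (auto simp: dualA_def vecA_def)
      moreover have "\<forall>c\<in>C. (\<Sum>i<Suc l'. (x#a') ! i * c ! i) mod f = 0"
      proof
        fix c assume "c \<in> C"
        hence cc: "c = 0 # tl c" "tl c \<in> C'" using cC by auto
        have "(\<Sum>i<Suc l'. (x#a') ! i * (0 # tl c) ! i) mod f = 0"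
          using a cc(2) by (simp only: sum_Cons) (simp add: dualA_def)
        thus "(\<Sum>i<Suc l'. (x#a') ! i * c ! i) mod f = 0" using cc(1) by metis
      qed
      ultimately show "x # a' \<in> dualA f (Suc l') C" by (simp add: dualA_def)
    qed
  qed
  have decD: "\<And>d. d \<in> dualA f (Suc l') C \<Longrightarrow> \<exists>x a'. d = x # a' \<and> inA f x \<and> a' \<in> dualA f l' C'"
  proof -
    fix d assume d: "d \<in> dualA f (Suc l') C"
    hence "length d = Suc l'" by (rule dual_len)
    then obtain x a' where "d = x # a'" by (cases d) auto
    thus "\<exists>x a'. d = x # a' \<and> inA f x \<and> a' \<in> dualA f l' C'" using d memD by blast
  qed
  have lenH': "length H'= l'" using goodH_D(1)[OF IH] .
  note IH2 = goodH_D(2-7)[OF IH[folded C'_def]]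
  have H0: "H!0 = 1 # replicate l' 0" by (simp add: H_def)
  have HS: "\<And>i. i < l' \<Longrightarrow> H!Suc i = 0 # H'!i" by (simp add: H_def lenH')
  have one: "inA f 1" using f by (simp add: inA_iff)
  have P1: "length H = Suc l'" by (simp add: H_def lenH')
  have P3: "\<forall>i<Suc l'. H!i \<in> dualA f (Suc l') C"
  proof (intro allI impI)
    fix i assume i: "i < Suc l'"
    show "H!i \<in> dualA f (Suc l') C"
    proof (cases i)
      case 0 thus ?thesis using H0 memD one zero_in_dual by simp
    next
      case (Suc i') thus ?thesis using HS[of i'] i memD IH2(1) by (simp add: inA_def)
    qed
  qed
  have P2: "\<forall>i<Suc l'. \<forall>j<Suc l'. i < j \<longrightarrow> H!i!j = 0"
  proof (intro allI impI)
    fix i j assume ij: "i < Suc l'" "j < Suc l'" "i < j"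
    then obtain j' where j': "j = Suc j'" by (cases j) auto
    show "H!i!j = 0"
    proof (cases i)
      case 0 thus ?thesis using H0 j' ij by simp
    next
      case (Suc i') thus ?thesis using HS[of i'] ij j' IH2(2) by simp
    qed
  qed
  have P4: "\<forall>i<Suc l'. \<forall>d\<in>dualA f (Suc l') C. (\<forall>j<Suc l'. i < j \<longrightarrow> d!j = 0) \<longrightarrow> H!i!i dvd d!i"
  proof (intro allI impI ballI)
    fix i d assume i: "i < Suc l'" and d: "d \<in> dualA f (Suc l') C" and z: "\<forall>j<Suc l'. i < j \<longrightarrow> d!j = 0"
    show "H!i!i dvd d!i"
    proof (cases i)
      case 0 thus ?thesis using H0 by simp
    next
      case (Suc i')
      obtain x a' where xa: "d = x # a'" "a' \<in> dualA f l' C'" using decD[OF d] by blast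
      have "\<forall>j<l'. i' < j \<longrightarrow> a'!j = 0" using z xa Suc by auto
      hence "H'!i'!i' dvd a'!i'" using IH2(3) xa Suc i by auto
      thus ?thesis using HS[of i'] Suc i xa by simp
    qed
  qed
  have P5: "\<forall>i<Suc l'. H!i!i = 0 \<or> lead_coeff (H!i!i) = 1"
  proof (intro allI impI)
    fix i assume i: "i < Suc l'"
    show "H!i!i = 0 \<or> lead_coeff (H!i!i) = 1"
    proof (cases i)
      case 0 thus ?thesis using H0 by simp
    next
      case (Suc i')
      hence "i' < l'" using i by simp
      hence "H'!i'!i' = 0 \<or> lead_coeff (H'!i'!i') = 1" using IH2(4) by blast
      thus ?thesis using HS[OF \<open>i' < l'\<close>] Suc by simp
    qed
  qed
  have P7: "\<forall>i<Suc l'. H!i!i = 0 \<longrightarrow> (\<forall>j<Suc l'. H!i!j = 0)"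
  proof (intro allI impI)
    fix i j assume i: "i < Suc l'" and z: "H!i!i = 0" and j: "j < Suc l'"
    show "H!i!j = 0"
    proof (cases i)
      case 0 thus ?thesis using H0 z by simp
    next
      case (Suc i')
      have hz: "H'!i'!i' = 0" using z HS[of i'] Suc i by simp
      have i': "i' < l'" using Suc i by simp
      have allz: "\<forall>j<l'. H'!i'!j = 0" using IH2(5) i' hz by blast
      show ?thesis
      proof (cases j)
        case 0 thus ?thesis using HS[OF i'] Suc by simp
      next
        case (Suc j') thus ?thesis using HS[OF i'] \<open>i = Suc i'\<close> allz j by simp
      qed
    qed
  qed
  have P6: "\<forall>p<Suc l'. \<forall>q<p. H!q!q \<noteq> 0 \<longrightarrow> H!p!q = 0 \<or> degree (H!p!q) < degree (H!q!q)"
  proof (intro allI impI)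
    fix p q assume p: "p < Suc l'" and q: "q < p" and nz: "H!q!q \<noteq> 0"
    obtain p' where p': "p = Suc p'" using q by (cases p) auto
    show "H!p!q = 0 \<or> degree (H!p!q) < degree (H!q!q)"
    proof (cases q)
      case 0 thus ?thesis using HS[of p'] p p' by simp
    next
      case (Suc q')
      thus ?thesis using HS[of p'] HS[of q'] p p' q nz IH2(6) by auto
    qed
  qed
  have "goodH f (Suc l') C H" unfolding goodH_def by (intro conjI P1 P2 P3 P4 P5 P6 P7)
  thus ?thesis by (simp only: H_def)
qed



lemma monic_deg0: "lead_coeff (g::'a::field poly) = 1 \<Longrightarrow> degree g = 0 \<Longrightarrow> g = 1"
proof (rule poly_eqI)
  fix n assume a: "lead_coeff g = 1" "degree g = 0"
  show "coeff g n = coeff 1 n"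
  proof (cases n)
    case 0 thus ?thesis using a by simp
  next
    case (Suc m) thus ?thesis using a coeff_eq_0[of g n] by simp
  qed
qed

lemma inA_minus: "f \<noteq> 0 \<Longrightarrow> inA f y \<Longrightarrow> inA f (- y)"
  by (simp add: inA_iff)

lemma sum_zero_vec: "(\<forall>j<n. a!j = 0) \<Longrightarrow> (\<Sum>j<n. a!j * (b!j::'b::semiring_0)) = 0"
  by simp

lemma inA_diff:
  assumes f0: "(f::'a::field poly) \<noteq> 0" and a: "inA f a" and b: "inA f b"
  shows "inA f (a - b)"
proof (cases "a = 0 \<and> b = 0")
  case True thus ?thesis by (simp add: inA_def)
next
  case False
  have da: "a = 0 \<or> degree a < degree f" and db: "b = 0 \<or> degree b < degree f"
    using a b inA_iff[OF f0] by auto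
  have fp: "0 < degree f" using False da db by auto
  have "degree a < degree f" using da fp by auto
  moreover have "degree b < degree f" using db fp by auto
  ultimately have "degree (a - b) < degree f" using degree_diff_le_max[of a b] by linarith
  thus ?thesis using inA_iff[OF f0] by simp
qed

lemma caseB:
  fixes f :: "'a::field poly"
  assumes fm: "lead_coeff f = 1"
  and AC: "A_code f (Suc l') C"
  and B: "bd C G"
  and hnz: "\<exists>r\<in>set G. hd r \<noteq> 0"
  and IH: "goodH f l' {c'. 0#c' \<in> C} H'"
  shows "goodH f (Suc l') C ((((f div hd (hd G)) mod f) # replicate l' 0) #
      map (\<lambda>hr. ((- (\<Sum>j<l'. hr ! j * tl (hd G) ! j)) div hd (hd G)) mod (f div hd (hd G)) # hr) H')"
proof -
  define g0 where "g0 = hd G"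
  define g where "g = hd g0"
  define g0' where "g0' = tl g0"
  define fg where "fg = f div g"
  define C' where "C' = {c'. 0#c' \<in> C}"
  define h11 where "h11 = fg mod f"
  define alpha where "alpha hr = ((- (\<Sum>j<l'. hr ! j * g0' ! j)) div g) mod fg" for hr
  define H where "H = (h11 # replicate l' 0) # map (\<lambda>hr. alpha hr # hr) H'"
  have f0: "f \<noteq> 0" using fm by auto
  obtain r where r: "r \<in> set G" "hd r \<noteq> 0" using hnz by blast
  have Gne: "G \<noteq> []" using r by auto
  then obtain rest where Gr: "G = g0 # rest" unfolding g0_def by (cases G) auto
  have g0G: "g0 \<in> set G" using Gr by simp
  have R0: "g0 \<in> C \<and> nzv g0 \<and> lead_coeff (lcoef g0) = 1 \<and>
        (\<forall>d\<in>C. nzv d \<and> lind d = lind g0 \<and> lead_coeff (lcoef d) = 1 \<longrightarrow> degree (lcoef g0) \<le> degree (lcoef d))"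
    using B g0G unfolding bd_def by blast
  have g0C: "g0 \<in> C" using R0 by blast
  have lenC: "\<And>c. c \<in> C \<Longrightarrow> length c = Suc l'" using AC by (rule code_len)
  have g0e: "g0 = g # g0'" unfolding g_def g0'_def using lenC[OF g0C]
    by (cases g0) auto
  have leng0': "length g0' = l'" using lenC[OF g0C] g0e by simp
  have rC: "r \<in> C" using B r(1) unfolding bd_def by blast
  have rne: "r \<noteq> []" using lenC[OF rC] by auto
  have lr: "lind r = 0" using lind_zero_iff[OF rne] r(2) rne by (simp add: hd_conv_nth)
  have lg0: "lind g0 = 0"
  proof (cases "r = g0")
    case True thus ?thesis using lr by simp
  next
    case False
    hence "r \<in> set rest" using r(1) Gr by simp
    moreover have "\<forall>y\<in>set rest. lind g0 < lind y" using B Gr by (simp add: bd_def)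
    ultimately show ?thesis using lr by auto
  qed
  have lcg0: "lcoef g0 = g" using lg0 g0e by (simp add: lcoef_def)
  have gm: "lead_coeff g = 1" using R0 lcg0 by simp
  have g0n: "g \<noteq> 0" using gm by auto
  have ginA: "inA f g" using code_inA[OF AC g0C, of 0] g0e by simp
  have degg: "degree g < degree f" using ginA g0n inA_iff[OF f0] by simp
  have cinA: "\<And>c i. c \<in> C \<Longrightarrow> i < Suc l' \<Longrightarrow> inA f (c!i)" using AC by (rule code_inA)
  have mindeg: "\<And>w. w \<in> C \<Longrightarrow> w!0 \<noteq> 0 \<Longrightarrow> degree g \<le> degree (w!0)"
  proof -
    fix w assume w: "w \<in> C" "w!0 \<noteq> 0"
    define p where "p = w!0"
    define k where "k = inverse (lead_coeff p)"
    have pn: "p \<noteq> 0" using w p_def by simp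
    have kn: "k \<noteq> 0" using pn by (simp add: k_def)
    have pA: "inA f p" using cinA[OF w(1), of 0] p_def by simp
    define w2 where "w2 = map (\<lambda>x. ([:k:] * x) mod f) w"
    have w2C: "w2 \<in> C" unfolding w2_def by (rule code_smul[OF AC w(1)])
    have lw: "length w = Suc l'" using lenC[OF w(1)] .
    have "w2!0 = (smult k p) mod f" using lw by (simp add: w2_def p_def)
    also have "\<dots> = smult k p" using pA by (simp add: mod_smult_left inA_def)
    finally have w20: "w2!0 = smult k p" .
    have w2n: "w2!0 \<noteq> 0" using w20 kn pn by simp
    have wne: "w \<noteq> []" using lw by (cases w) auto
    have w2ne: "w2 \<noteq> []" using wne by (simp add: w2_def)
    have lw2: "lind w2 = 0" using lind_zero_iff[OF w2ne] w2n by simp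
    have nzw2: "nzv w2" using w2n w2ne by (auto simp: nzv_iff)
    have "lead_coeff (lcoef w2) = 1" using w20 lw2 pn by (simp add: lcoef_def k_def)
    hence "degree (lcoef g0) \<le> degree (lcoef w2)" using R0 w2C nzw2 lw2 lg0 by simp
    thus "degree g \<le> degree (w!0)" using lcg0 lw2 w20 kn by (simp add: lcoef_def p_def)
  qed
  have gdvd: "\<And>c. c \<in> C \<Longrightarrow> g dvd c!0"
  proof -
    fix c assume c: "c \<in> C"
    define y where "y = c!0"
    define q where "q = y div g"
    define rr where "rr = y mod g"
    have yA: "inA f y" using cinA[OF c, of 0] y_def by simp
    have rrA: "inA f rr"
    proof (cases "rr = 0")
      case True thus ?thesis by (simp add: inA_def)
    next
      case False
      hence "degree rr < degree g" using degree_mod_less[OF g0n, of y] rr_def by auto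
      thus ?thesis using degg inA_iff[OF f0] by simp
    qed
    have eq: "(-q) * g = rr - y" using div_mult_mod_eq[of y g] unfolding q_def rr_def by (simp add: algebra_simps)
    have dA: "inA f (rr - y)" using inA_diff[OF f0 rrA yA] .
    define w where "w = map2 (+) c (map (\<lambda>x. ((-q) * x) mod f) g0)"
    have wC: "w \<in> C" unfolding w_def by (rule code_comb[OF AC c g0C])
    have lc: "length c = Suc l'" using lenC[OF c] .
    have "w!0 = y + ((-q) * g) mod f" using lc g0e by (simp add: w_def y_def)
    also have "\<dots> = rr" using eq dA by (simp add: inA_def)
    finally have w0: "w!0 = rr" .
    have "rr = 0"
    proof (rule ccontr)
      assume "rr \<noteq> 0"
      hence "degree g \<le> degree rr" using mindeg[OF wC] w0 by simp
      moreover have "degree rr < degree g" using degree_mod_less[OF g0n, of y] rr_def \<open>rr \<noteq> 0\<close> by auto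
      ultimately show False by simp
    qed
    thus "g dvd c!0" using rr_def y_def by (simp add: dvd_eq_mod_eq_0)
  qed
  have gdf: "g dvd f"
  proof -
    define rr where "rr = f mod g"
    have rrA: "inA f rr"
    proof (cases "rr = 0")
      case True thus ?thesis by (simp add: inA_def)
    next
      case False
      hence "degree rr < degree g" using degree_mod_less[OF g0n, of f] rr_def by auto
      thus ?thesis using degg inA_iff[OF f0] by simp
    qed
    have eq: "(- fg) * g = rr - f" using div_mult_mod_eq[of f g] unfolding fg_def rr_def by (simp add: algebra_simps)
    define w where "w = map (\<lambda>x. ((- fg) * x) mod f) g0"
    have wC: "w \<in> C" unfolding w_def by (rule code_smul[OF AC g0C])
    have "w!0 = ((- fg) * g) mod f" using g0e by (simp add: w_def)
    also have "\<dots> = rr mod f" using eq by (simp add: minus_mod_self2)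
    also have "\<dots> = rr" using rrA by (simp add: inA_def)
    finally have w0: "w!0 = rr" .
    have "rr = 0"
    proof (rule ccontr)
      assume "rr \<noteq> 0"
      hence "degree g \<le> degree rr" using mindeg[OF wC] w0 by simp
      moreover have "degree rr < degree g" using degree_mod_less[OF g0n, of f] rr_def \<open>rr \<noteq> 0\<close> by auto
      ultimately show False by simp
    qed
    thus ?thesis using rr_def by (simp add: dvd_eq_mod_eq_0)
  qed
  have fgf: "fg * g = f" unfolding fg_def using gdf by (rule dvd_div_mult_self)
  have fgn: "fg \<noteq> 0" using fgf f0 by auto
  have degf: "degree f = degree fg + degree g" using degree_mult_eq[OF fgn g0n] fgf by simp
  have fgA: "\<And>z::'a poly. z = 0 \<or> degree z < degree fg \<Longrightarrow> inA f z"
  proof -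
    fix z :: "'a poly" assume "z = 0 \<or> degree z < degree fg"
    hence "z = 0 \<or> degree z < degree f" using degf by linarith
    thus "inA f z" using inA_iff[OF f0] by simp
  qed
  have sumg0: "\<And>x a'. (\<Sum>i<Suc l'. (x#a')!i * g0!i) = x*g + (\<Sum>i<l'. a'!i * g0'!i)"
    using g0e sum_Cons by metis
  have memD: "\<And>x a'. x # a' \<in> dualA f (Suc l') C \<longleftrightarrow>
      inA f x \<and> a' \<in> dualA f l' C' \<and> f dvd (x*g + (\<Sum>i<l'. a'!i * g0'!i))"
  proof -
    fix x a'
    show "x # a' \<in> dualA f (Suc l') C \<longleftrightarrow>
      inA f x \<and> a' \<in> dualA f l' C' \<and> f dvd (x*g + (\<Sum>i<l'. a'!i * g0'!i))"
    proof
      assume a: "x # a' \<in> dualA f (Suc l') C"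
      have va: "inA f x \<and> a' \<in> vecA f l'" using a by (auto simp: dualA_def vecA_def)
      have "\<forall>c\<in>C'. (\<Sum>i<l'. a' ! i * c ! i) mod f = 0"
      proof
        fix c assume "c \<in> C'"
        hence "0 # c \<in> C" by (simp add: C'_def)
        hence "(\<Sum>i<Suc l'. (x#a') ! i * (0#c) ! i) mod f = 0" using a by (simp add: dualA_def)
        thus "(\<Sum>i<l'. a' ! i * c ! i) mod f = 0" by (simp only: sum_Cons) simp
      qed
      hence aD: "a' \<in> dualA f l' C'" using va by (simp add: dualA_def)
      have "f dvd (\<Sum>i<Suc l'. (x#a') ! i * g0 ! i)" using dual_mod_dvd[OF a g0C] .
      thus "inA f x \<and> a' \<in> dualA f l' C' \<and> f dvd (x*g + (\<Sum>i<l'. a'!i * g0'!i))"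
        using va aD sumg0 by simp
    next
      assume a: "inA f x \<and> a' \<in> dualA f l' C' \<and> f dvd (x*g + (\<Sum>i<l'. a'!i * g0'!i))"
      define S where "S = (\<Sum>i<l'. a'!i * g0'!i)"
      have aD: "a' \<in> dualA f l' C'" and xA: "inA f x" and fS: "f dvd (x*g + S)" using a S_def by auto
      have la: "length a' = l'" using dual_len[OF aD] .
      have "x # a' \<in> vecA f (Suc l')" using a by (auto simp: dualA_def vecA_def)
      moreover have "\<forall>c\<in>C. (\<Sum>i<Suc l'. (x#a') ! i * c ! i) mod f = 0"
      proof
        fix c assume c: "c \<in> C"
        have lc: "length c = Suc l'" using lenC[OF c] .
        then obtain y c'' where cy: "c = y # c''" by (cases c) auto
        have lc'': "length c'' = l'" using lc cy by simp
        have "g dvd y" using gdvd[OF c] cy by simp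
        then obtain q where yq: "y = g * q" by (auto simp: dvd_def)
        have yA: "inA f y" using cinA[OF c, of 0] cy by simp
        have myA: "inA f (- y)" using inA_minus[OF f0 yA] .
        define w where "w = map2 (+) c (map (\<lambda>z. ((-q) * z) mod f) g0)"
        have wC: "w \<in> C" unfolding w_def by (rule code_comb[OF AC c g0C])
        define w' where "w' = map2 (+) c'' (map (\<lambda>z. ((-q) * z) mod f) g0')"
        have "((-q) * g) mod f = - y" using myA yq by (simp add: inA_def algebra_simps)
        hence "w = 0 # w'" using cy g0e by (simp add: w_def w'_def)
        hence w'C: "w' \<in> C'" using wC by (simp add: C'_def)
        have w'i: "\<And>i. i < l' \<Longrightarrow> w'!i = c''!i + ((-q) * g0'!i) mod f"
          using lc'' leng0' by (simp add: w'_def)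
        define T where "T = (\<Sum>i<l'. a'!i * (((-q) * g0'!i) mod f))"
        define U where "U = (\<Sum>i<l'. a'!i * w'!i)"
        have fU: "f dvd U" unfolding U_def using dual_mod_dvd[OF aD w'C] .
        have fT: "f dvd (T - (-q) * S)" unfolding T_def S_def by (rule sum_mod_dvd)
        have "U = (\<Sum>i<l'. a'!i * c''!i + a'!i * (((-q) * g0'!i) mod f))"
          unfolding U_def by (rule sum.cong) (simp_all add: w'i algebra_simps)
        hence UT: "U = (\<Sum>i<l'. a'!i * c''!i) + T"
          unfolding T_def by (simp only: sum.distrib)
        have "x*y + (\<Sum>i<l'. a'!i * c''!i) = U - (T - (-q) * S) + q * (x*g + S)"
          using UT yq by (simp add: algebra_simps)
        also have "f dvd \<dots>" using dvd_add[OF dvd_diff[OF fU fT] dvd_mult[OF fS, of q]] .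
        finally have "f dvd (x*y + (\<Sum>i<l'. a'!i * c''!i))" .
        hence "f dvd (\<Sum>i<Suc l'. (x#a') ! i * (y # c'') ! i)" by (simp only: sum_Cons)
        thus "(\<Sum>i<Suc l'. (x#a') ! i * c ! i) mod f = 0" using cy by (simp add: dvd_eq_mod_eq_0)
      qed
      ultimately show "x # a' \<in> dualA f (Suc l') C" by (simp add: dualA_def)
    qed
  qed
  have decD: "\<And>d. d \<in> dualA f (Suc l') C \<Longrightarrow> \<exists>x a'. d = x # a' \<and> x # a' \<in> dualA f (Suc l') C"
  proof -
    fix d assume d: "d \<in> dualA f (Suc l') C"
    hence "length d = Suc l'" by (rule dual_len)
    then obtain x a' where "d = x # a'" by (cases d) auto
    thus "\<exists>x a'. d = x # a' \<and> x # a' \<in> dualA f (Suc l') C" using d by blast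
  qed
  have gS: "\<And>hr. hr \<in> dualA f l' C' \<Longrightarrow> g dvd (\<Sum>j<l'. hr!j * g0'!j)"
  proof -
    fix hr assume hr: "hr \<in> dualA f l' C'"
    define w where "w = map (\<lambda>x. (fg * x) mod f) g0"
    have wC: "w \<in> C" unfolding w_def by (rule code_smul[OF AC g0C])
    define w' where "w' = map (\<lambda>x. (fg * x) mod f) g0'"
    have "w = 0 # w'" using g0e fgf by (simp add: w_def w'_def)
    hence w'C: "w' \<in> C'" using wC by (simp add: C'_def)
    have "f dvd (\<Sum>j<l'. hr!j * w'!j)" using dual_mod_dvd[OF hr w'C] .
    hence d1: "f dvd (\<Sum>j<l'. hr!j * ((fg * g0'!j) mod f))" using leng0' by (simp add: w'_def)
    have d2: "f dvd ((\<Sum>j<l'. hr!j * ((fg * g0'!j) mod f)) - fg * (\<Sum>j<l'. hr!j * g0'!j))"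
      by (rule sum_mod_dvd)
    have "f dvd ((\<Sum>j<l'. hr!j * ((fg * g0'!j) mod f)) - ((\<Sum>j<l'. hr!j * ((fg * g0'!j) mod f)) - fg * (\<Sum>j<l'. hr!j * g0'!j)))"
      using dvd_diff[OF d1 d2] .
    hence "f dvd fg * (\<Sum>j<l'. hr!j * g0'!j)" by simp
    hence "fg * g dvd fg * (\<Sum>j<l'. hr!j * g0'!j)" using fgf by simp
    thus "g dvd (\<Sum>j<l'. hr!j * g0'!j)" using fgn by simp
  qed
  have alphaD: "\<And>hr. hr \<in> dualA f l' C' \<Longrightarrow> alpha hr # hr \<in> dualA f (Suc l') C"
  proof -
    fix hr assume hr: "hr \<in> dualA f l' C'"
    define S where "S = (\<Sum>j<l'. hr!j * g0'!j)"
    define k where "k = (- S) div g"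
    have kg: "k * g = - S" unfolding k_def using gS[OF hr] S_def by (simp add: dvd_div_mult_self)
    have al: "alpha hr = k mod fg" by (simp add: alpha_def k_def S_def)
    have "alpha hr * g + S = - ((k div fg) * f)"
    proof -
      have "k = (k div fg) * fg + k mod fg" by simp
      hence "k * g = (k div fg) * (fg * g) + alpha hr * g" using al by (metis distrib_right mult.assoc)
      hence e: "k * g = (k div fg) * f + alpha hr * g" using fgf by simp
      have "alpha hr * g + S = alpha hr * g - k * g" using kg by simp
      also have "\<dots> = - ((k div fg) * f)" unfolding e by simp
      finally show ?thesis .
    qed
    hence fd: "f dvd (alpha hr * g + S)" by simp
    have "alpha hr = 0 \<or> degree (alpha hr) < degree fg" using al degree_mod_less[OF fgn] by simp
    hence "inA f (alpha hr)" using fgA by blast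
    thus "alpha hr # hr \<in> dualA f (Suc l') C" using memD hr fd S_def by simp
  qed
  have hcase: "(degree g = 0 \<and> h11 = 0 \<and> fg = f) \<or> (0 < degree g \<and> h11 = fg \<and> degree fg < degree f)"
  proof (cases "degree g = 0")
    case True
    hence "g = 1" using monic_deg0 gm by blast
    thus ?thesis using True by (simp add: h11_def fg_def)
  next
    case False
    hence "degree fg < degree f" using degf by simp
    thus ?thesis using False by (simp add: h11_def mod_poly_less)
  qed
  have lenH': "length H'= l'" using goodH_D(1)[OF IH] .
  note IH2 = goodH_D(2-7)[OF IH[folded C'_def]]
  have H0: "H!0 = h11 # replicate l' 0" by (simp add: H_def)
  have HS: "\<And>i. i < l' \<Longrightarrow> H!Suc i = alpha (H'!i) # H'!i" by (simp add: H_def lenH')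
  have P1: "length H = Suc l'" by (simp add: H_def lenH')
  have P3: "\<forall>i<Suc l'. H!i \<in> dualA f (Suc l') C"
  proof (intro allI impI)
    fix i assume i: "i < Suc l'"
    show "H!i \<in> dualA f (Suc l') C"
    proof (cases i)
      case 0
      have "h11 * g mod f = 0" unfolding h11_def using fgf by (simp add: mod_mult_left_eq)
      hence "f dvd (h11 * g + (\<Sum>i<l'. replicate l' 0 ! i * g0' ! i))" by (simp add: dvd_eq_mod_eq_0)
      moreover have "inA f h11" by (simp add: h11_def inA_def)
      ultimately show ?thesis using H0 memD zero_in_dual 0 by simp
    next
      case (Suc i')
      hence "i' < l'" using i by simp
      thus ?thesis using HS alphaD IH2(1) Suc by simp
    qed
  qed
  have P2: "\<forall>i<Suc l'. \<forall>j<Suc l'. i < j \<longrightarrow> H!i!j = 0"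
  proof (intro allI impI)
    fix i j assume ij: "i < Suc l'" "j < Suc l'" "i < j"
    then obtain j' where j': "j = Suc j'" by (cases j) auto
    show "H!i!j = 0"
    proof (cases i)
      case 0 thus ?thesis using H0 j' ij by simp
    next
      case (Suc i')
      have "i' < l'" "j' < l'" "i' < j'" using ij Suc j' by auto
      hence "H'!i'!j' = 0" using IH2(2) by blast
      thus ?thesis using HS[OF \<open>i' < l'\<close>] Suc j' by simp
    qed
  qed
  have P4: "\<forall>i<Suc l'. \<forall>d\<in>dualA f (Suc l') C. (\<forall>j<Suc l'. i < j \<longrightarrow> d!j = 0) \<longrightarrow> H!i!i dvd d!i"
  proof (intro allI impI ballI)
    fix i d assume i: "i < Suc l'" and d: "d \<in> dualA f (Suc l') C" and z: "\<forall>j<Suc l'. i < j \<longrightarrow> d!j = 0"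
    obtain x a' where xa: "d = x # a'" "x # a' \<in> dualA f (Suc l') C" using decD[OF d] by blast
    have M: "inA f x \<and> a' \<in> dualA f l' C' \<and> f dvd (x*g + (\<Sum>i<l'. a'!i * g0'!i))"
      using memD xa(2) by blast
    show "H!i!i dvd d!i"
    proof (cases i)
      case 0
      have az: "\<forall>j<l'. a'!j = 0"
      proof (intro allI impI)
        fix j assume "j < l'"
        hence "d!Suc j = 0" using z 0 by simp
        thus "a'!j = 0" using xa by simp
      qed
      have "f dvd x * g" using M sum_zero_vec[OF az] by simp
      hence fgx: "fg dvd x" using fgf g0n by (metis dvd_mult_cancel_right)
      have "h11 dvd x"
      proof (cases "x = 0")
        case True thus ?thesis by simp
      next
        case False
        have xl: "degree x < degree f" using M False inA_iff[OF f0] by simp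
        have "degree fg \<le> degree x" using dvd_imp_degree_le[OF fgx False] .
        thus ?thesis using hcase xl fgx by auto
      qed
      thus ?thesis using H0 xa 0 by simp
    next
      case (Suc i')
      have i': "i' < l'" using Suc i by simp
      have "\<forall>j<l'. i' < j \<longrightarrow> a'!j = 0"
      proof (intro allI impI)
        fix j assume "j < l'" "i' < j"
        hence "d!Suc j = 0" using z Suc by simp
        thus "a'!j = 0" using xa by simp
      qed
      hence "H'!i'!i' dvd a'!i'" using IH2(3) M i' by blast
      thus ?thesis using HS[OF i'] Suc xa by simp
    qed
  qed
  have P5: "\<forall>i<Suc l'. H!i!i = 0 \<or> lead_coeff (H!i!i) = 1"
  proof (intro allI impI)
    fix i assume i: "i < Suc l'"
    show "H!i!i = 0 \<or> lead_coeff (H!i!i) = 1"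
    proof (cases i)
      case 0
      have "lead_coeff f = lead_coeff fg * lead_coeff g" using fgf lead_coeff_mult by metis
      hence "lead_coeff fg = 1" using fm gm by simp
      thus ?thesis using H0 0 hcase by auto
    next
      case (Suc i')
      hence "i' < l'" using i by simp
      hence "H'!i'!i' = 0 \<or> lead_coeff (H'!i'!i') = 1" using IH2(4) by blast
      thus ?thesis using HS[OF \<open>i' < l'\<close>] Suc by simp
    qed
  qed
  have P7: "\<forall>i<Suc l'. H!i!i = 0 \<longrightarrow> (\<forall>j<Suc l'. H!i!j = 0)"
  proof (intro allI impI)
    fix i j assume i: "i < Suc l'" and z: "H!i!i = 0" and j: "j < Suc l'"
    show "H!i!j = 0"
    proof (cases i)
      case 0 thus ?thesis using H0 z j by (cases j) auto
    next
      case (Suc i')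
      have i': "i' < l'" using Suc i by simp
      have hz: "H'!i'!i' = 0" using z HS[OF i'] Suc by simp
      have allz: "\<forall>j<l'. H'!i'!j = 0" using IH2(5) i' hz by blast
      have "(\<Sum>j<l'. H'!i' ! j * g0' ! j) = 0" using sum_zero_vec[OF allz] .
      hence a0: "alpha (H'!i') = 0" by (simp add: alpha_def)
      show ?thesis
      proof (cases j)
        case 0 thus ?thesis using HS[OF i'] Suc a0 by simp
      next
        case (Suc j') thus ?thesis using HS[OF i'] \<open>i = Suc i'\<close> allz j by simp
      qed
    qed
  qed
  have P6: "\<forall>p<Suc l'. \<forall>q<p. H!q!q \<noteq> 0 \<longrightarrow> H!p!q = 0 \<or> degree (H!p!q) < degree (H!q!q)"
  proof (intro allI impI)
    fix p q assume p: "p < Suc l'" and q: "q < p" and nz: "H!q!q \<noteq> 0"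
    obtain p' where p': "p = Suc p'" using q by (cases p) auto
    have pl: "p' < l'" using p p' by simp
    show "H!p!q = 0 \<or> degree (H!p!q) < degree (H!q!q)"
    proof (cases q)
      case 0
      have "h11 \<noteq> 0" using nz H0 0 by simp
      hence hf: "h11 = fg" using hcase by auto
      have "alpha (H'!p') = 0 \<or> degree (alpha (H'!p')) < degree fg"
        unfolding alpha_def using degree_mod_less[OF fgn] by blast
      thus ?thesis using HS[OF pl] p' 0 H0 hf by simp
    next
      case (Suc q')
      have "q' < p'" using q p' Suc by simp
      hence "H'!q'!q' \<noteq> 0 \<longrightarrow> H'!p'!q' = 0 \<or> degree (H'!p'!q') < degree (H'!q'!q')"
        using IH2(6) pl by blast
      moreover have "q' < l'" using \<open>q' < p'\<close> pl by simp
      ultimately show ?thesis using HS[OF pl] HS[OF \<open>q' < l'\<close>] p' Suc nz by simp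
    qed
  qed
  have "goodH f (Suc l') C H" unfolding goodH_def by (intro conjI P1 P2 P3 P4 P5 P6 P7)
  thus ?thesis by (simp only: H_def h11_def alpha_def fg_def g_def g0_def g0'_def)
qed



lemma idmat_len: "length (idmat n) = n" by (simp add: idmat_def)
lemma idmat_rlen: "i < n \<Longrightarrow> length (idmat n ! i) = n" by (simp add: idmat_def del: upt_Suc)
lemma idmat_nth: "i < n \<Longrightarrow> j < n \<Longrightarrow> idmat n ! i ! j = (if i = j then 1 else 0)"
  by (simp add: idmat_def del: upt_Suc)

lemma idmat_Suc: "idmat (Suc n) = (1 # replicate n 0) # map ((#) 0) (idmat n)"
proof (rule nth_equalityI)
  show "length (idmat (Suc n)) = length ((1 # replicate n 0) # map ((#) 0) (idmat n))"
    by (simp add: idmat_len)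
  fix i assume i: "i < length (idmat (Suc n))"
  hence i': "i < Suc n" by (simp add: idmat_len)
  show "idmat (Suc n) ! i = ((1 # replicate n 0) # map ((#) 0) (idmat n)) ! i"
  proof (rule nth_equalityI)
    show "length (idmat (Suc n) ! i) = length (((1 # replicate n 0) # map ((#) 0) (idmat n)) ! i)"
      using i' by (cases i) (simp_all add: idmat_rlen idmat_len)
    fix j assume j: "j < length (idmat (Suc n) ! i)"
    hence j': "j < Suc n" using i' by (simp add: idmat_rlen)
    show "idmat (Suc n) ! i ! j = ((1 # replicate n 0) # map ((#) 0) (idmat n)) ! i ! j"
    proof (cases i)
      case 0 thus ?thesis using j' by (cases j) (simp_all add: idmat_nth)
    next
      case (Suc i1)
      hence i1: "i1 < n" using i' by simp
      show ?thesis
      proof (cases j)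
        case 0 thus ?thesis using Suc i1 by (simp add: idmat_nth idmat_len)
      next
        case (Suc j1) thus ?thesis using \<open>i = Suc i1\<close> i1 j' by (simp add: idmat_nth idmat_len)
      qed
    qed
  qed
qed

lemma gmd_nil: "gen_mat_dual f n [] = idmat n"
proof (induction n)
  case 0 thus ?case by (simp add: idmat_def)
next
  case (Suc n)
  show ?case
  proof (cases "n = 0")
    case True thus ?thesis by (simp add: idmat_def)
  next
    case False thus ?thesis using Suc by (simp add: idmat_Suc)
  qed
qed

lemma gmd_A:
  assumes "\<forall>r\<in>set G. hd r = 0"
  shows "gen_mat_dual f (Suc l') G = (1 # replicate l' 0) # map ((#) 0) (gen_mat_dual f l' (map tl G))"
  using assms by (cases l') simp_all

lemma gmd_B:
  assumes "\<not> (\<forall>r\<in>set G. hd r = 0)"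
  shows "gen_mat_dual f (Suc l') G = ((((f div hd (hd G)) mod f) # replicate l' 0) #
      map (\<lambda>hr. ((- (\<Sum>j<l'. hr ! j * tl (hd G) ! j)) div hd (hd G)) mod (f div hd (hd G)) # hr)
        (gen_mat_dual f l' (map tl (tl G))))"
proof -
  have c: "(\<forall>r\<in>set G. hd r = 0) = False" using assms by simp
  show ?thesis
proof (cases "l' = 0")
  case True thus ?thesis by (simp add: c Let_def)
next
  case False
  show ?thesis
  proof (cases "length G = 1")
    case True
    hence "tl G = []" by (cases G) auto
    thus ?thesis using False True by (simp add: c Let_def gmd_nil)
  next
    case False2: False
    thus ?thesis using False by (simp add: c Let_def)
  qed
qed
qed

lemma main_rec:
  fixes f :: "'a::field poly"
  assumes fm: "lead_coeff f = 1" and df: "degree f \<ge> 1"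
  shows "A_code f l C \<Longrightarrow> bd C G \<Longrightarrow> goodH f l C (gen_mat_dual f l G)"
proof (induction l arbitrary: C G)
  case 0 thus ?case by (simp add: goodH_def)
next
  case (Suc l')
  have AC: "A_code f (Suc l') C" and B: "bd C G" using Suc.prems by auto
  have f0: "f \<noteq> 0" using fm by auto
  have lenC: "\<forall>c\<in>C. length c = Suc l'" using code_len[OF AC] by blast
  have AC': "A_code f l' {c'. 0 # c' \<in> C}" using A_code_sub[OF AC] .
  have bT: "bd {c'. 0 # c' \<in> C} (map tl (filter (\<lambda>r. hd r = 0) G))" using bd_transfer[OF B lenC] .
  have GC: "\<And>r. r \<in> set G \<Longrightarrow> r \<in> C" using B unfolding bd_def by blast
  show ?case
  proof (cases "\<forall>r\<in>set G. hd r = 0")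
    case True
    have "filter (\<lambda>r. hd r = 0) G = G" using True by simp
    hence IH: "goodH f l' {c'. 0 # c' \<in> C} (gen_mat_dual f l' (map tl G))"
      using Suc.IH[OF AC'] bT by simp
    have hd0: "\<forall>c\<in>C. hd c = 0"
    proof
      fix c assume c: "c \<in> C"
      have cne: "c \<noteq> []" using lenC c by auto
      have "c!0 = 0"
      proof (cases "nzv c")
        case False thus ?thesis using cne nzv_iff[of c] by auto
      next
        case nz: True
        obtain g where g: "g \<in> set G" "lind c = lind g" using B c nz unfolding bd_def by blast
        have gne: "g \<noteq> []" using lenC GC[OF g(1)] by auto
        have "hd g = 0" using True g(1) by blast
        hence "g!0 = 0" using gne by (simp add: hd_conv_nth)
        hence "lind g \<noteq> 0" using lind_zero_iff[OF gne] by simp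
        thus ?thesis using g(2) lind_zero_iff[OF cne] by simp
      qed
      thus "hd c = 0" using cne by (simp add: hd_conv_nth)
    qed
    have "goodH f (Suc l') C ((1 # replicate l' 0) # map ((#) 0) (gen_mat_dual f l' (map tl G)))"
      using caseA[OF f0 df AC hd0 IH] .
    thus ?thesis using gmd_A[OF True] by simp
  next
    case False
    then obtain r where r: "r \<in> set G" "hd r \<noteq> 0" by blast
    then obtain g0 rest where Gr: "G = g0 # rest" by (cases G) auto
    have rne: "r \<noteq> []" using lenC GC[OF r(1)] by auto
    have lr: "lind r = 0" using lind_zero_iff[OF rne] r(2) rne by (simp add: hd_conv_nth)
    have srt: "\<forall>y\<in>set rest. lind g0 < lind y" using B Gr by (simp add: bd_def)
    have "r = g0" using r(1) Gr srt lr by auto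
    hence hg0: "hd g0 \<noteq> 0" using r by simp
    have "\<forall>y\<in>set rest. hd y = 0"
    proof
      fix y assume y: "y \<in> set rest"
      have yne: "y \<noteq> []" using lenC GC[of y] Gr y by auto
      have "lind y \<noteq> 0" using srt y by fastforce
      hence "y!0 = 0" using lind_zero_iff[OF yne] by simp
      thus "hd y = 0" using yne by (simp add: hd_conv_nth)
    qed
    hence "filter (\<lambda>r. hd r = 0) G = tl G" using Gr hg0 by simp
    hence IH: "goodH f l' {c'. 0 # c' \<in> C} (gen_mat_dual f l' (map tl (tl G)))"
      using Suc.IH[OF AC'] bT by simp
    have hnz: "\<exists>r\<in>set G. hd r \<noteq> 0" using r by blast
    show ?thesis unfolding gmd_B[OF False] by (rule caseB[OF fm AC B hnz IH])
  qed
qed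



lemma nzv_rev[simp]: "nzv (rev x) = nzv x" by (simp add: nzv_def)

lemma final_cgm:
  fixes f :: "'a::field poly"
  assumes GH: "goodH f l C H"
  shows "is_CGM (recip_dual f l C) (map rev (rev (filter nzv H)))"
proof -
  define D where "D = dualA f l C"
  define E where "E = rev ` D"
  define K where "K = map rev (rev H)"
  note GHD = goodH_D[OF GH, folded D_def]
  have lenH: "length H = l" using GHD(1) .
  have rowH: "\<And>i. i < l \<Longrightarrow> H!i \<in> D" using GHD(2) by blast
  have lenrow: "\<And>i. i < l \<Longrightarrow> length (H!i) = l" using rowH dual_len unfolding D_def by blast
  have lenK: "length K = l" using lenH by (simp add: K_def)
  have Ki: "\<And>i. i < l \<Longrightarrow> K!i = rev (H!(l - Suc i))"
    using lenH by (simp add: K_def rev_nth)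
  have lenKi: "\<And>i. i < l \<Longrightarrow> length (K!i) = l" using Ki lenrow by simp
  have Kij: "\<And>i j. i < l \<Longrightarrow> j < l \<Longrightarrow> K!i!j = H!(l - Suc i)!(l - Suc j)"
  proof -
    fix i j assume i: "i < l" and j: "j < l"
    have "l - Suc i < l" using i by simp
    thus "K!i!j = H!(l - Suc i)!(l - Suc j)" using Ki[OF i] lenrow j by (simp add: rev_nth)
  qed
  have KE: "\<And>i. i < l \<Longrightarrow> K!i \<in> E"
  proof -
    fix i assume i: "i < l"
    have "l - Suc i < l" using i by simp
    hence "H!(l - Suc i) \<in> D" by (rule rowH)
    thus "K!i \<in> E" unfolding E_def using Ki[OF i] by simp
  qed
  have Q2: "\<And>i j. i < l \<Longrightarrow> j < i \<Longrightarrow> K!i!j = 0"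
  proof -
    fix i j assume i: "i < l" and ji: "j < i"
    have a: "l - Suc i < l" "l - Suc j < l" "l - Suc i < l - Suc j" using i ji by auto
    have "H!(l - Suc i)!(l - Suc j) = 0" using GHD(3) a by blast
    thus "K!i!j = 0" using Kij i ji by simp
  qed
  have Q4: "\<And>i e. i < l \<Longrightarrow> e \<in> E \<Longrightarrow> (\<forall>j<i. e!j = 0) \<Longrightarrow> K!i!i dvd e!i"
  proof -
    fix i e assume i: "i < l" and e: "e \<in> E" and z: "\<forall>j<i. e!j = 0"
    obtain d where d: "d \<in> D" "e = rev d" using e unfolding E_def by blast
    have ld: "length d = l" using d dual_len unfolding D_def by blast
    have ej: "\<And>j. j < l \<Longrightarrow> e!j = d!(l - Suc j)" using d ld by (simp add: rev_nth)
    define m where "m = l - Suc i"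
    have ml: "m < l" using i m_def by simp
    have "\<forall>k<l. m < k \<longrightarrow> d!k = 0"
    proof (intro allI impI)
      fix k assume k: "k < l" "m < k"
      have "l - Suc k < i" using k m_def i by simp
      hence "e!(l - Suc k) = 0" using z by blast
      moreover have "e!(l - Suc k) = d!(l - Suc (l - Suc k))" using ej k by simp
      moreover have "l - Suc (l - Suc k) = k" using k by simp
      ultimately show "d!k = 0" by simp
    qed
    hence "H!m!m dvd d!m" using GHD(4) ml d(1) by blast
    moreover have "K!i!i = H!m!m" using Kij i m_def by simp
    moreover have "e!i = d!m" using ej i m_def by simp
    ultimately show "K!i!i dvd e!i" by simp
  qed
  have Q5: "\<And>i. i < l \<Longrightarrow> K!i!i = 0 \<or> lead_coeff (K!i!i) = 1"
  proof -
    fix i assume i: "i < l"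
    have "l - Suc i < l" using i by simp
    thus "K!i!i = 0 \<or> lead_coeff (K!i!i) = 1" using GHD(5) Kij[OF i i] by simp
  qed
  have Q7: "\<And>i j. i < l \<Longrightarrow> j < l \<Longrightarrow> K!i!i = 0 \<Longrightarrow> K!i!j = 0"
  proof -
    fix i j assume i: "i < l" and j: "j < l" and z: "K!i!i = 0"
    have m: "l - Suc i < l" "l - Suc j < l" using i j by auto
    have "H!(l - Suc i)!(l - Suc i) = 0" using z Kij[OF i i] by simp
    hence "\<forall>jj<l. H!(l - Suc i)!jj = 0" using GHD(6) m(1) by blast
    thus "K!i!j = 0" using Kij[OF i j] m(2) by simp
  qed
  have Q6: "\<And>t i. t < i \<Longrightarrow> i < l \<Longrightarrow> K!i!i \<noteq> 0 \<Longrightarrow> K!t!i = 0 \<or> degree (K!t!i) < degree (K!i!i)"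
  proof -
    fix t i assume ti: "t < i" and i: "i < l" and nz: "K!i!i \<noteq> 0"
    have t: "t < l" using ti i by simp
    define p where "p = l - Suc t"
    define q where "q = l - Suc i"
    have pl: "p < l" and qp: "q < p" using ti i p_def q_def by auto
    have "H!q!q \<noteq> 0" using nz Kij[OF i i] q_def by simp
    hence "H!p!q = 0 \<or> degree (H!p!q) < degree (H!q!q)" using GHD(7) pl qp by blast
    thus "K!t!i = 0 \<or> degree (K!t!i) < degree (K!i!i)"
      using Kij[OF t i] Kij[OF i i] p_def q_def by simp
  qed
  have nzK: "\<And>i. i < l \<Longrightarrow> nzv (K!i) \<longleftrightarrow> K!i!i \<noteq> 0"
  proof -
    fix i assume i: "i < l"
    show "nzv (K!i) \<longleftrightarrow> K!i!i \<noteq> 0"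
    proof
      assume "nzv (K!i)"
      then obtain j where "j < length (K!i)" "K!i!j \<noteq> 0" using nzv_iff by blast
      thus "K!i!i \<noteq> 0" using Q7[OF i] lenKi[OF i] by auto
    next
      assume "K!i!i \<noteq> 0"
      thus "nzv (K!i)" using lenKi[OF i] i nzv_iff by auto
    qed
  qed
  have lindK: "\<And>i. i < l \<Longrightarrow> K!i!i \<noteq> 0 \<Longrightarrow> lind (K!i) = i"
    using lenKi Q2 by (intro lind_eqI) auto
  define ps where "ps = filter (\<lambda>i. K!i!i \<noteq> 0) [0..<l]"
  have psl: "\<And>i. i \<in> set ps \<Longrightarrow> i < l \<and> K!i!i \<noteq> 0" by (simp add: ps_def)
  have out: "map rev (rev (filter nzv H)) = map (nth K) ps"
  proof -
    have "map rev (rev (filter nzv H)) = map rev (filter nzv (rev H))" by (simp add: rev_filter)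
    also have "\<dots> = filter nzv K" by (simp add: K_def filter_map o_def)
    also have "K = map (nth K) [0..<l]" using lenK map_nth by metis
    hence "filter nzv K = map (nth K) (filter (nzv \<circ> nth K) [0..<l])"
      by (metis filter_map)
    also have "filter (nzv \<circ> nth K) [0..<l] = ps" unfolding ps_def
      by (rule filter_cong) (simp_all add: nzK)
    finally show ?thesis .
  qed
  have sps: "sorted_wrt (<) ps" unfolding ps_def by (intro sorted_wrt_filter sorted_wrt_upt)
  have bdE: "bd E (map (nth K) ps)"
  proof -
    have m0: "map (\<lambda>i. lind (K!i)) ps = ps"
    proof (rule map_idI)
      fix x assume "x \<in> set ps"
      thus "lind (K!x) = x" using psl lindK by blast
    qed
    have m: "map lind (map (nth K) ps) = ps" using m0 by (simp add: o_def)
    have s: "sorted_wrt (<) (map lind (map (nth K) ps))" using m sps by simp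
    have rows: "\<forall>g\<in>set (map (nth K) ps). g \<in> E \<and> nzv g \<and> lead_coeff (lcoef g) = 1 \<and>
        (\<forall>d\<in>E. nzv d \<and> lind d = lind g \<and> lead_coeff (lcoef d) = 1 \<longrightarrow> degree (lcoef g) \<le> degree (lcoef d))"
    proof
      fix g assume "g \<in> set (map (nth K) ps)"
      then obtain i where ii: "i \<in> set ps" "g = K!i" by auto
      have i: "i < l" "K!i!i \<noteq> 0" using psl ii(1) by auto
      have li: "lind g = i" using lindK i ii by simp
      have lc: "lcoef g = K!i!i" using li ii by (simp add: lcoef_def)
      show "g \<in> E \<and> nzv g \<and> lead_coeff (lcoef g) = 1 \<and>
        (\<forall>d\<in>E. nzv d \<and> lind d = lind g \<and> lead_coeff (lcoef d) = 1 \<longrightarrow> degree (lcoef g) \<le> degree (lcoef d))"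
      proof (intro conjI ballI impI)
        show "g \<in> E" using KE i ii by simp
        show "nzv g" using nzK i ii by simp
        show "lead_coeff (lcoef g) = 1" using Q5[OF i(1)] i lc by simp
        fix d assume d: "d \<in> E" "nzv d \<and> lind d = lind g \<and> lead_coeff (lcoef d) = 1"
        have L: "lind d < length d \<and> d!(lind d) \<noteq> 0 \<and> (\<forall>j<lind d. d!j = 0)" using lind_nz d by blast
        have "K!i!i dvd d!i" using Q4[OF i(1) d(1)] L d li by simp
        moreover have "d!i \<noteq> 0" using L d li by simp
        ultimately have "degree (K!i!i) \<le> degree (d!i)" by (rule dvd_imp_degree_le)
        thus "degree (lcoef g) \<le> degree (lcoef d)" using lc d li by (simp add: lcoef_def)
      qed
    qed
    have cover: "\<forall>c\<in>E. nzv c \<longrightarrow> (\<exists>g\<in>set (map (nth K) ps). lind c = lind g)"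
    proof (intro ballI impI)
      fix c assume c: "c \<in> E" "nzv c"
      have L: "lind c < length c \<and> c!(lind c) \<noteq> 0 \<and> (\<forall>j<lind c. c!j = 0)" using lind_nz c by blast
      obtain d where "d \<in> D" "c = rev d" using c unfolding E_def by blast
      hence lc: "length c = l" using dual_len unfolding D_def by auto
      define q where "q = lind c"
      have ql: "q < l" using L lc q_def by simp
      have "K!q!q dvd c!q" using Q4[OF ql c(1)] L q_def by simp
      hence "K!q!q \<noteq> 0" using L q_def by auto
      hence "q \<in> set ps" using ql by (simp add: ps_def)
      moreover have "lind (K!q) = q" using lindK ql \<open>K!q!q \<noteq> 0\<close> by simp
      ultimately show "\<exists>g\<in>set (map (nth K) ps). lind c = lind g" using q_def by force
    qed
    show ?thesis unfolding bd_def using s rows cover by blast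
  qed
  have BD: "basis_div E (map (nth K) ps)" using bd_basis_div[OF bdE] .
  have deg: "\<forall>i<length (map (nth K) ps). \<forall>t<i. (map (nth K) ps) ! t ! lind ((map (nth K) ps) ! i) = 0 \<or>
         degree ((map (nth K) ps) ! t ! lind ((map (nth K) ps) ! i)) < degree ((map (nth K) ps) ! i ! lind ((map (nth K) ps) ! i))"
  proof (intro allI impI)
    fix i t assume i: "i < length (map (nth K) ps)" and ti: "t < i"
    have ip: "i < length ps" using i by simp
    have tp: "t < length ps" using ti ip by simp
    have pi: "ps!i \<in> set ps" using ip by simp
    have pil: "ps!i < l" "K!(ps!i)!(ps!i) \<noteq> 0" using psl[OF pi] by auto
    have lt: "ps!t < ps!i" using sorted_wrt_nth_less[OF sps ti ip] .
    have li: "lind (K!(ps!i)) = ps!i" using lindK pil by simp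
    show "(map (nth K) ps) ! t ! lind ((map (nth K) ps) ! i) = 0 \<or>
         degree ((map (nth K) ps) ! t ! lind ((map (nth K) ps) ! i)) < degree ((map (nth K) ps) ! i ! lind ((map (nth K) ps) ! i))"
      using Q6[OF lt pil] ip tp li by simp
  qed
  have "is_CGM E (map (nth K) ps)" unfolding is_CGM_def using BD deg by blast
  thus ?thesis unfolding out E_def D_def recip_dual_def .
qed

theorem mainTheorem3:
  fixes f :: "'a::{field,finite} poly" and l :: nat
    and C :: "'a poly list set" and G :: "'a poly list list"
  assumes "lead_coeff f = 1"
    and "A_code f l C"
    and "\<exists>u\<in>C. nzv u"
    and "basis_div C G"
  shows "is_CGM (recip_dual f l C)
           (map rev (rev (filter nzv (gen_mat_dual f l G))))"
proof -
  have f0: "f \<noteq> 0" using assms(1) by auto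
  obtain u where u: "u \<in> C" "nzv u" using assms(3) by blast
  then obtain x where x: "x \<in> set u" "x \<noteq> 0" by (auto simp: nzv_def)
  have "inA f x" using assms(2) u x unfolding A_code_def vecA_def by blast
  hence "degree x < degree f" using x inA_iff[OF f0] by simp
  hence df: "degree f \<ge> 1" by simp
  have "goodH f l C (gen_mat_dual f l G)"
    using main_rec[OF assms(1) df assms(2) basis_div_bd[OF assms(4)]] .
  thus ?thesis by (rule final_cgm)
qed


end
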